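(* If $\gamma$ is an edge path in the 1-skeleton of $K$ of length $n$ which has minimal length among edge paths joining its endpoints, then its subdivision $\omega(\gamma)$ is an edge path in the 1-skeleton of $\omega(K)$ of length $2n$ which has minimal length among edge paths in $\omega(K)$ joining its endpoints.
   Context: $K$ is the pentagonal combinatorial tiling: a 2-dimensional CW-complex homeomorphic to the open disk, obtained as follows. The subdivision rule $\omega$ acts on a pentagon with boundary vertices $v_1,\dots,v_5$ in cyclic order (indices mod 5): add a vertex $m_i$ inside each edge $v_iv_{i+1}$, interior vertices $c_1,\dots,c_5$, edges $c_ic_{i+1}$ and $c_im_i$, and replace the face by the central pentagon $c_1\cdots c_5$ and petals $v_i\,m_i\,c_i\,c_{i-1}\,m_{i-1}$. $K_0$ is one pentagon, $K_n=\omega^n(K_0)$, $K_n$ embeds onto the central superpentagon $\omega^n(\text{central face of }\omega(K_0))$ of $K_{n+1}$, and $K$ is the direct limit. $\omega(K)$ is the complex on the same space obtained by applying $\omega$ to every face of $K$; each edge of $K$ becomes two edges of $\omega(K)$, so an edge path $\gamma$ of $K$ becomes an edge path $\omega(\gamma)$ of $\omega(K)$. The length of an edge path is its number of edges. *)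

theory Defs
  imports Main "HOL-Library.FSet"
begin

(* Corner n i : the i-th corner (i<5) of the superpentagon S_n,
   where S_0 = K_0 and S_n is the central face of omega(S_(n+1)).
   Mid e : the vertex added by omega inside the edge with endpoint set e.
   Cen F e : the interior vertex c_i added by omega inside the face with vertex
   set F, the one joined to the midpoint of the edge e = v_i v_(i+1) of F. *)
datatype vx = Corner nat nat | Mid "vx fset" | Cen "vx fset" "vx fset"

(* a face is a list of its 5 boundary vertices in cyclic order *)
definition nxt :: "nat \<Rightarrow> nat" where "nxt i = (i + 1) mod 5"
definition prv :: "nat \<Rightarrow> nat" where "prv i = (i + 4) mod 5"

definition edge_of :: "vx list \<Rightarrow> nat \<Rightarrow> vx fset" where
  "edge_of F i = {|F ! i, F ! nxt i|}"

definition omega_face :: "vx list \<Rightarrow> vx list set" where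
  "omega_face F =
     (let m = (\<lambda>i. Mid (edge_of F i));
          c = (\<lambda>i. Cen (fset_of_list F) (edge_of F i))
      in insert (map c [0..<5])
           {[F ! i, m i, c i, c (prv i), m (prv i)] | i. i < 5})"

definition omega :: "vx list set \<Rightarrow> vx list set" where
  "omega C = (\<Union>F\<in>C. omega_face F)"

definition corners :: "nat \<Rightarrow> vx list" where
  "corners n = map (Corner n) [0..<5]"

(* petal i of omega(S_(n+1)), whose central face is S_n = corners n *)
definition petal :: "nat \<Rightarrow> nat \<Rightarrow> vx list" where
  "petal n i = [Corner (Suc n) i, Mid {|Corner (Suc n) i, Corner (Suc n) (nxt i)|},
                Corner n i, Corner n (prv i),
                Mid {|Corner (Suc n) (prv i), Corner (Suc n) i|}]"

(* K_n, realised so that K_n is literally the central superpentagon of K_(n+1):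
   K_(n+1) = omega^n(omega(S_(n+1))) = K_n \<union> omega^n(petals of S_(n+1)) *)
fun Kn :: "nat \<Rightarrow> vx list set" where
  "Kn 0 = {corners 0}"
| "Kn (Suc n) = Kn n \<union> (omega ^^ n) {petal n i | i. i < 5}"

(* the pentagonal tiling K (direct limit = union) and omega(K) *)
definition Kpent :: "vx list set" where "Kpent = (\<Union>n. Kn n)"
definition omegaK :: "vx list set" where "omegaK = omega Kpent"

definition verts :: "vx list set \<Rightarrow> vx set" where
  "verts C = (\<Union>F\<in>C. set F)"

definition adj :: "vx list set \<Rightarrow> vx \<Rightarrow> vx \<Rightarrow> bool" where
  "adj C a b = (a \<noteq> b \<and> (\<exists>F\<in>C. \<exists>i<5. {|a, b|} = edge_of F i))"

definition edge_path :: "vx list set \<Rightarrow> vx list \<Rightarrow> bool" where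
  "edge_path C xs = (xs \<noteq> [] \<and> hd xs \<in> verts C \<and>
                     (\<forall>i < length xs - 1. adj C (xs ! i) (xs ! Suc i)))"

definition plen :: "vx list \<Rightarrow> nat" where "plen xs = length xs - 1"

definition geodesic :: "vx list set \<Rightarrow> vx list \<Rightarrow> bool" where
  "geodesic C xs = (edge_path C xs \<and>
     (\<forall>ys. edge_path C ys \<and> hd ys = hd xs \<and> last ys = last xs \<longrightarrow> plen xs \<le> plen ys))"

fun subdiv :: "vx list \<Rightarrow> vx list" where
  "subdiv [] = []"
| "subdiv [x] = [x]"
| "subdiv (x # y # xs) = x # Mid {|x, y|} # subdiv (y # xs)"

end

theory Submission
  imports Defs
begin
primrec bb :: "vx \<Rightarrow> int" where
  "bb (Corner n i) = - int n"
| "bb (Mid X) = 1 + Max (fset (fimage bb X))"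
| "bb (Cen S X) = 1 + Max (fset (fimage bb S))"

lemma bb_Mid2[simp]: "bb (Mid {|a,c|}) = 1 + max (bb a) (bb c)" by simp
lemma bb_Cen[simp]: "bb (Cen (fset_of_list F) X) = 1 + Max (bb ` set F)" by (simp add: fset_of_list.rep_eq)

definition Inv :: "vx list set \<Rightarrow> int \<Rightarrow> bool" where
  "Inv C t = (\<forall>F\<in>C. length F = 5 \<and> (\<forall>v\<in>set F. bb v \<le> t) \<and> (\<forall>i<5. max (bb (F!i)) (bb (F ! nxt i)) = t))"

lemma nxt_lt: "nxt i < 5" by (simp add: nxt_def)
lemma prv_lt: "prv i < 5" by (simp add: prv_def)

lemma Max_face: assumes "length F = 5" "\<forall>v\<in>set F. bb v \<le> t" "max (bb (F!0)) (bb (F ! 1)) = t"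
  shows "Max (bb ` set F) = t"
proof (rule Max_eqI)
  show "finite (bb ` set F)" by simp
  show "\<And>y. y \<in> bb ` set F \<Longrightarrow> y \<le> t" using assms(2) by auto
  have "F!0 \<in> set F" "F!1 \<in> set F" using assms(1) by auto
  then show "t \<in> bb ` set F" using assms(3) unfolding max_def by (auto split: if_splits)
qed

abbreviation mm where "mm F i \<equiv> Mid (edge_of F i)"
abbreviation cc where "cc F i \<equiv> Cen (fset_of_list F) (edge_of F i)"

lemma omega_face_cases: "G \<in> omega_face F \<Longrightarrow> G = map (cc F) [0..<5] \<or> (\<exists>i<5. G = [F!i, mm F i, cc F i, cc F (prv i), mm F (prv i)])"
  unfolding omega_face_def Let_def by blast

lemma Inv_face: assumes L: "length F = 5" and le: "\<forall>v\<in>set F. bb v \<le> t"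
   and ed: "\<forall>i<5. max (bb (F!i)) (bb (F ! nxt i)) = t" and G: "G \<in> omega_face F"
  shows "length G = 5 \<and> (\<forall>v\<in>set G. bb v \<le> t + 1) \<and> (\<forall>i<5. max (bb (G ! i)) (bb (G ! nxt i)) = t + 1)"
proof -
  have M: "Max (bb ` set F) = t" using Max_face[OF L le] ed[rule_format, of 0] by (simp add: nxt_def)
  have Fi: "\<And>i. i < 5 \<Longrightarrow> bb (F!i) \<le> t" using le L by auto
  have bm: "\<And>i. bb (mm F i) = 1 + max (bb (F!i)) (bb (F ! nxt i))" by (simp add: edge_of_def)
  have bc: "\<And>i. bb (cc F i) = t + 1" by (simp only: bb_Cen M add.commute)
  from omega_face_cases[OF G] show ?thesis
  proof (elim disjE exE conjE)
    assume G: "G = map (cc F) [0..<5]"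
    have "\<forall>v\<in>set G. bb v \<le> t + 1" unfolding G using bc by auto
    moreover have "\<forall>i<5. max (bb (G ! i)) (bb (G ! nxt i)) = t + 1"
    proof (intro allI impI)
      fix i :: nat assume "i < 5"
      then have "G ! i = cc F i" "G ! nxt i = cc F (nxt i)"
        unfolding G using nxt_lt[of i] by simp_all
      then show "max (bb (G ! i)) (bb (G ! nxt i)) = t + 1" using bc by simp
    qed
    ultimately show ?thesis unfolding G by simp
  next
    fix i assume i: "i < 5" and G: "G = [F!i, mm F i, cc F i, cc F (prv i), mm F (prv i)]"
    have m1: "bb (mm F i) = t + 1" using bm ed i by simp
    have m2: "bb (mm F (prv i)) = t + 1" using bm ed prv_lt by simp
    have f: "bb (F!i) \<le> t" using Fi i by simp
    show ?thesis
    proof (intro conjI allI impI)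
      show "length G = 5" using G by simp
      show "\<forall>v\<in>set G. bb v \<le> t + 1" unfolding G using m1 m2 f bc by (simp del: bb.simps)
      fix j :: nat assume j: "j < 5"
      have "j = 0 \<or> j = 1 \<or> j = 2 \<or> j = 3 \<or> j = 4" using j by linarith
      then show "max (bb (G ! j)) (bb (G ! nxt j)) = t + 1"
        using G m1 m2 f bc by (elim disjE) (simp_all del: bb.simps add: nxt_def max_def)
    qed
  qed
qed

lemma Inv_omega: assumes "Inv C t" shows "Inv (omega C) (t+1)"
  unfolding Inv_def
proof
  fix G assume "G \<in> omega C"
  then obtain F where F: "F \<in> C" "G \<in> omega_face F" unfolding omega_def by auto
  show "length G = 5 \<and> (\<forall>v\<in>set G. bb v \<le> t + 1) \<and> (\<forall>i<5. max (bb (G ! i)) (bb (G ! nxt i)) = t + 1)"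
  proof -
    have a: "length F = 5 \<and> (\<forall>v\<in>set F. bb v \<le> t) \<and> (\<forall>i<5. max (bb (F!i)) (bb (F ! nxt i)) = t)"
      using assms F(1) unfolding Inv_def by blast
    show ?thesis using Inv_face[OF conjunct1[OF a] conjunct1[OF conjunct2[OF a]] conjunct2[OF conjunct2[OF a]] F(2)] .
  qed
qed

lemma Inv_pow: "Inv C t \<Longrightarrow> Inv ((omega ^^ n) C) (t + int n)"
proof (induction n)
  case (Suc n) then have "Inv (omega ((omega ^^ n) C)) (t + int n + 1)" by (simp add: Inv_omega)
  then show ?case by (simp add: algebra_simps)
qed simp

lemma Inv_Un: "Inv A t \<Longrightarrow> Inv B t \<Longrightarrow> Inv (A \<union> B) t" unfolding Inv_def by blast

lemma Inv_petal: "Inv {petal n i | i. i < 5} (- int n)"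
  unfolding Inv_def
proof (intro ballI)
  fix F assume "F \<in> {petal n i | i. i < 5}"
  then obtain i where F: "F = petal n i" by blast
  have A: "length F = 5" unfolding F petal_def by simp
  have B: "\<forall>v\<in>set F. bb v \<le> - int n" unfolding F petal_def by (simp add: max_def)
  have C: "max (bb (F!j)) (bb (F ! nxt j)) = - int n" if j: "j < 5" for j
  proof -
    have "j = 0 \<or> j = 1 \<or> j = 2 \<or> j = 3 \<or> j = 4" using j by linarith
    then show ?thesis unfolding F petal_def by (elim disjE) (simp_all add: nxt_def max_def)
  qed
  show "length F = 5 \<and> (\<forall>v\<in>set F. bb v \<le> - int n) \<and> (\<forall>j<5. max (bb (F!j)) (bb (F ! nxt j)) = - int n)"
    using A B C by blast
qed

lemma Inv_Kn: "Inv (Kn n) 0"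
proof (induction n)
  case 0
  have C: "max (bb (corners 0 ! j)) (bb (corners 0 ! nxt j)) = 0" if j: "j < 5" for j
    using j nxt_lt[of j] unfolding corners_def by simp
  show ?case unfolding Inv_def using C by (simp add: corners_def)
next
  case (Suc n)
  have "Inv ((omega ^^ n) {petal n i | i. i < 5}) (- int n + int n)" by (rule Inv_pow[OF Inv_petal])
  then show ?case using Suc by (simp add: Inv_Un)
qed

lemma Inv_K: "Inv Kpent 0" using Inv_Kn unfolding Inv_def Kpent_def by blast

lemma fpair_eq: "{|a, b|} = {|p, q|} \<Longrightarrow> (a = p \<and> b = q) \<or> (a = q \<and> b = p)"
proof -
  assume "{|a, b|} = {|p, q|}"
  then have "fset {|a, b|} = fset {|p, q|}" by simp
  then have "{a, b} = {p, q}" by simp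
  then show ?thesis by (simp add: doubleton_eq_iff)
qed

lemma adj_sym: "adj C a b \<Longrightarrow> adj C b a"
  unfolding adj_def by (auto simp: finsert_commute)

lemma K_props: assumes "F \<in> Kpent"
  shows "length F = 5" "\<forall>v\<in>set F. bb v \<le> 0" "\<forall>i<5. max (bb (F!i)) (bb (F ! nxt i)) = 0"
  using Inv_K assms unfolding Inv_def by auto

lemma K_Max: "F \<in> Kpent \<Longrightarrow> Max (bb ` set F) = 0"
  using Max_face[OF K_props(1,2)] K_props(3)[rule_format, of F 0] by (simp add: nxt_def)

lemma verts_bb: "v \<in> verts Kpent \<Longrightarrow> bb v \<le> 0"
  unfolding verts_def using K_props(2) by blast

lemma mm_bb: "F \<in> Kpent \<Longrightarrow> i < 5 \<Longrightarrow> bb (mm F i) = 1"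
  using K_props(3)[of F] by (simp add: edge_of_def)

lemma cc_bb: "F \<in> Kpent \<Longrightarrow> bb (cc F i) = 1"
  using K_Max[of F] by (simp only: bb_Cen)

lemma mm_notin: "F \<in> Kpent \<Longrightarrow> i < 5 \<Longrightarrow> mm F i \<notin> verts Kpent"
  using mm_bb verts_bb by fastforce

lemma cc_notin: "F \<in> Kpent \<Longrightarrow> cc F i \<notin> verts Kpent"
  using cc_bb verts_bb by fastforce

lemma F_in_verts: "F \<in> Kpent \<Longrightarrow> i < 5 \<Longrightarrow> F ! i \<in> verts Kpent"
proof -
  assume "F \<in> Kpent" "i < 5"
  moreover then have "F ! i \<in> set F" using K_props(1)[of F] by simp
  ultimately show ?thesis unfolding verts_def by blast
qed

lemma adj_verts: assumes "adj Kpent a b" shows "a \<in> verts Kpent" "b \<in> verts Kpent"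
proof -
  from assms obtain F i where F: "F \<in> Kpent" "i < 5" "{|a, b|} = edge_of F i" unfolding adj_def by blast
  have o: "(a = F!i \<and> b = F!nxt i) \<or> (a = F!nxt i \<and> b = F!i)"
    using fpair_eq[OF F(3)[unfolded edge_of_def]] .
  have v: "F!i \<in> verts Kpent" "F!nxt i \<in> verts Kpent" using F_in_verts[OF F(1) F(2)] F_in_verts[OF F(1) nxt_lt] .
  show "a \<in> verts Kpent" "b \<in> verts Kpent" using o v by blast+
qed

lemma five_cases: "k < (5::nat) \<Longrightarrow> k = 0 \<or> k = 1 \<or> k = 2 \<or> k = 3 \<or> k = 4"
  by linarith

lemma prv_nxt: "i < 5 \<Longrightarrow> prv (nxt i) = i"
  by (drule five_cases) (elim disjE, simp_all add: prv_def nxt_def)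

lemma nxt_prv: "i < 5 \<Longrightarrow> nxt (prv i) = i"
  by (drule five_cases) (elim disjE, simp_all add: prv_def nxt_def)

lemma petal_in: "F \<in> Kpent \<Longrightarrow> i < 5 \<Longrightarrow> [F!i, mm F i, cc F i, cc F (prv i), mm F (prv i)] \<in> omegaK"
  unfolding omegaK_def omega_def omega_face_def Let_def by blast

lemma central_in: "F \<in> Kpent \<Longrightarrow> map (cc F) [0..<5] \<in> omegaK"
  unfolding omegaK_def omega_def omega_face_def Let_def by blast

lemma adj_mm: assumes F: "F \<in> Kpent" and i: "i < 5"
  shows "adj omegaK (F!i) (mm F i)" "adj omegaK (mm F i) (F ! nxt i)"
proof -
  have n1: "F!i \<noteq> mm F i" using mm_notin[OF F i] F_in_verts[OF F i] by auto
  have n2: "mm F i \<noteq> F ! nxt i" using mm_notin[OF F i] F_in_verts[OF F nxt_lt] by auto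
  let ?G1 = "[F!i, mm F i, cc F i, cc F (prv i), mm F (prv i)]"
  have "{|F!i, mm F i|} = edge_of ?G1 0" by (simp add: edge_of_def nxt_def)
  then have "\<exists>ia<5. {|F!i, mm F i|} = edge_of ?G1 ia" by (intro exI[of _ 0]) simp
  then show "adj omegaK (F!i) (mm F i)" unfolding adj_def using n1 petal_in[OF F i] by blast
  let ?G2 = "[F!nxt i, mm F (nxt i), cc F (nxt i), cc F (prv (nxt i)), mm F (prv (nxt i))]"
  have "{|mm F i, F!nxt i|} = edge_of ?G2 4" using prv_nxt[OF i] by (simp add: edge_of_def nxt_def)
  then have "\<exists>ia<5. {|mm F i, F!nxt i|} = edge_of ?G2 ia" by (intro exI[of _ 4]) simp
  then show "adj omegaK (mm F i) (F ! nxt i)" unfolding adj_def using n2 petal_in[OF F nxt_lt] by blast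
qed

lemma adj_subdiv: assumes "adj Kpent a b"
  shows "adj omegaK a (Mid {|a, b|}) \<and> adj omegaK (Mid {|a, b|}) b"
proof -
  from assms obtain F i where F: "F \<in> Kpent" "i < 5" and e: "{|a, b|} = edge_of F i" unfolding adj_def by blast
  have "(a = F!i \<and> b = F!nxt i) \<or> (a = F!nxt i \<and> b = F!i)"
    using fpair_eq[OF e[unfolded edge_of_def]] .
  then show ?thesis
  proof
    assume "a = F!i \<and> b = F!nxt i"
    then show ?thesis using adj_mm[OF F] e by simp
  next
    assume ab: "a = F!nxt i \<and> b = F!i"
    then show ?thesis using adj_sym[OF adj_mm(2)[OF F]] adj_sym[OF adj_mm(1)[OF F]] e by simp
  qed
qed

lemma edge_path_conv: "edge_path C xs = (xs \<noteq> [] \<and> hd xs \<in> verts C \<and> successively (adj C) xs)"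
  unfolding edge_path_def successively_conv_nth by (auto simp: less_diff_conv)

lemma subdiv_Cons: "\<exists>zs. subdiv (y # xs) = y # zs"
  by (cases xs) auto

lemma subdiv_succ: "successively (adj Kpent) xs \<Longrightarrow> successively (adj omegaK) (subdiv xs)"
proof (induction xs rule: subdiv.induct)
  case (3 x y xs)
  obtain zs where z: "subdiv (y # xs) = y # zs" using subdiv_Cons by blast
  have "adj Kpent x y" "successively (adj Kpent) (y # xs)" using "3.prems" by auto
  then show ?case using "3.IH" adj_subdiv z by auto
qed auto

lemma subdiv_len: "xs \<noteq> [] \<Longrightarrow> length (subdiv xs) = 2 * length xs - 1"
  by (induction xs rule: subdiv.induct) auto

lemma subdiv_hd: "xs \<noteq> [] \<Longrightarrow> hd (subdiv xs) = hd xs"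
  by (induction xs rule: subdiv.induct) auto

lemma subdiv_last: "xs \<noteq> [] \<Longrightarrow> last (subdiv xs) = last xs"
proof (induction xs rule: subdiv.induct)
  case (3 x y xs)
  obtain zs where z: "subdiv (y # xs) = y # zs" using subdiv_Cons by blast
  then show ?case using "3.IH" by auto
qed auto

lemma subdiv_nonempty: "xs \<noteq> [] \<Longrightarrow> subdiv xs \<noteq> []"
  by (induction xs rule: subdiv.induct) auto

lemma verts_sub: "verts Kpent \<subseteq> verts omegaK"
proof
  fix v assume "v \<in> verts Kpent"
  then obtain F where F: "F \<in> Kpent" "v \<in> set F" unfolding verts_def by auto
  then obtain i where i: "i < 5" "v = F ! i" using K_props(1)[OF F(1)] by (auto simp: in_set_conv_nth)
  show "v \<in> verts omegaK" unfolding verts_def by (rule UN_I[OF petal_in[OF F(1) i(1)]]) (simp add: i)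
qed

lemma core5:
  fixes a b c d e \<mu> :: int
  assumes "\<bar>a-b\<bar> \<le> 1" "\<bar>b-c\<bar> \<le> 1" "\<bar>c-d\<bar> \<le> 1" "\<bar>d-e\<bar> \<le> 1" "\<bar>e-a\<bar> \<le> 1"
    "\<mu> \<le> a" "\<mu> \<le> b" "\<mu> \<le> c" "\<mu> \<le> d" "\<mu> \<le> e" "\<mu> = a \<or> \<mu> = b \<or> \<mu> = c \<or> \<mu> = d \<or> \<mu> = e"
  shows "\<bar>max (a+b-1) (2*\<mu>+1) - max (b+c-1) (2*\<mu>+1)\<bar> \<le> 1"
  using assms unfolding max_def abs_le_iff by (elim disjE; simp split: if_split; linarith)

lemma core2:
  fixes a b \<mu> :: int
  assumes "\<mu> \<le> a" "\<mu> \<le> b"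
  shows "\<bar>max (a+b-1) (2*\<mu>+1) - (a+b)\<bar> \<le> 1"
  using assms unfolding max_def abs_le_iff by (simp split: if_split; linarith)

definition reach :: "vx \<Rightarrow> nat \<Rightarrow> vx \<Rightarrow> bool" where
  "reach x k v = (\<exists>ys. ys \<noteq> [] \<and> successively (adj Kpent) ys \<and> hd ys = x \<and> last ys = v \<and> length ys = Suc k)"

definition dK :: "vx \<Rightarrow> vx \<Rightarrow> nat" where
  "dK x v = (if \<exists>k. reach x k v then (LEAST k. reach x k v) else 0)"

lemma reach_step: assumes "reach x k v" "adj Kpent v w" shows "reach x (Suc k) w"
proof -
  obtain ys where ys: "ys \<noteq> []" "successively (adj Kpent) ys" "hd ys = x" "last ys = v" "length ys = Suc k"
    using assms(1) unfolding reach_def by blast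
  have "successively (adj Kpent) (ys @ [w])" using ys assms(2) by (simp add: successively_append_iff)
  then show ?thesis unfolding reach_def using ys by (intro exI[of _ "ys @ [w]"]) simp
qed

lemma dK_le: assumes "adj Kpent v w" shows "dK x w \<le> dK x v + 1"
proof (cases "\<exists>k. reach x k v")
  case True
  then have r: "reach x (dK x v) v" unfolding dK_def by (auto intro: LeastI_ex)
  then have r2: "reach x (Suc (dK x v)) w" using reach_step assms by blast
  then have "(LEAST k. reach x k w) \<le> Suc (dK x v)" by (rule Least_le)
  then show ?thesis unfolding dK_def[of x w] using r2 by auto
next
  case False
  have "\<not> (\<exists>k. reach x k w)"
  proof
    assume "\<exists>k. reach x k w"
    then obtain k where "reach x k w" by blast
    then have "reach x (Suc k) v" using reach_step adj_sym[OF assms] by blast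
    then show False using False by blast
  qed
  then show ?thesis unfolding dK_def by simp
qed

lemma dK_lip: "adj Kpent v w \<Longrightarrow> \<bar>int (dK x v) - int (dK x w)\<bar> \<le> 1"
  using dK_le[of v w x] dK_le[OF adj_sym, of v w x] by linarith

definition ff :: "vx \<Rightarrow> vx \<Rightarrow> int" where
  "ff x z = (if z \<in> verts Kpent then 2 * int (dK x z) else (case z of
      Mid X \<Rightarrow> int (Min (dK x ` fset X)) + int (Max (dK x ` fset X))
    | Cen S X \<Rightarrow> max (int (Min (dK x ` fset X)) + int (Max (dK x ` fset X)) - 1) (2 * int (Min (dK x ` fset S)) + 1)
    | Corner _ _ \<Rightarrow> 0))"

lemma minmax2: "int (Min {p, q}) + int (Max {p, q}) = int p + int (q::nat)"
  by (simp add: min_def max_def)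

lemma ff_vert: "v \<in> verts Kpent \<Longrightarrow> ff x v = 2 * int (dK x v)"
  unfolding ff_def by simp

lemma ff_mm: assumes "F \<in> Kpent" "k < 5"
  shows "ff x (mm F k) = int (dK x (F!k)) + int (dK x (F ! nxt k))"
proof -
  have "ff x (mm F k) = int (Min (dK x ` fset (edge_of F k))) + int (Max (dK x ` fset (edge_of F k)))"
    unfolding ff_def using mm_notin[OF assms] by simp
  also have "dK x ` fset (edge_of F k) = {dK x (F!k), dK x (F!nxt k)}" by (simp add: edge_of_def)
  finally show ?thesis using minmax2 by simp
qed

definition mu :: "vx \<Rightarrow> vx list \<Rightarrow> int" where
  "mu x F = int (Min (dK x ` set F))"

lemma ff_cc: assumes "F \<in> Kpent" "k < 5"
  shows "ff x (cc F k) = max (int (dK x (F!k)) + int (dK x (F ! nxt k)) - 1) (2 * mu x F + 1)"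
proof -
  have "ff x (cc F k) = max (int (Min (dK x ` fset (edge_of F k))) + int (Max (dK x ` fset (edge_of F k))) - 1)
        (2 * int (Min (dK x ` fset (fset_of_list F))) + 1)"
    unfolding ff_def using cc_notin[OF assms(1)] by simp
  also have "dK x ` fset (edge_of F k) = {dK x (F!k), dK x (F!nxt k)}" by (simp add: edge_of_def)
  also have "fset (fset_of_list F) = set F" by (simp add: fset_of_list.rep_eq)
  finally show ?thesis using minmax2 unfolding mu_def by simp
qed

lemma mu_le: assumes "F \<in> Kpent" "k < 5" shows "mu x F \<le> int (dK x (F!k))"
proof -
  have "F!k \<in> set F" using K_props(1)[OF assms(1)] assms(2) by simp
  then show ?thesis unfolding mu_def by simp
qed

lemma mu_att: assumes "F \<in> Kpent" shows "\<exists>j<5. mu x F = int (dK x (F!j))"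
proof -
  have "set F \<noteq> {}" using K_props(1)[OF assms] by auto
  then have "Min (dK x ` set F) \<in> dK x ` set F" by (intro Min_in) auto
  then obtain v where v: "v \<in> set F" "Min (dK x ` set F) = dK x v" by auto
  then obtain j where "j < length F" "v = F!j" by (auto simp: in_set_conv_nth)
  then show ?thesis using v K_props(1)[OF assms] unfolding mu_def by auto
qed

lemma face_lip: assumes "F \<in> Kpent" "k < 5"
  shows "\<bar>int (dK x (F!k)) - int (dK x (F ! nxt k))\<bar> \<le> 1"
proof (cases "F!k = F!nxt k")
  case True then show ?thesis by simp
next
  case False
  have "adj Kpent (F!k) (F!nxt k)" unfolding adj_def using False assms by (auto simp: edge_of_def)
  then show ?thesis by (rule dK_lip)
qed

lemma nxt5: "k < 5 \<Longrightarrow> nxt (nxt (nxt (nxt (nxt k)))) = k"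
  by (drule five_cases) (elim disjE, simp_all add: nxt_def)

lemma cover5: "k < 5 \<Longrightarrow> j < 5 \<Longrightarrow> j = k \<or> j = nxt k \<or> j = nxt (nxt k) \<or> j = nxt (nxt (nxt k)) \<or> j = nxt (nxt (nxt (nxt k)))"
  apply (drule five_cases, drule five_cases)
  apply (elim disjE)
  apply (simp_all add: nxt_def)
  done

lemma cc_lip: assumes F: "F \<in> Kpent" and k: "k < 5"
  shows "\<bar>ff x (cc F k) - ff x (cc F (nxt k))\<bar> \<le> 1"
proof -
  define d where "d = (\<lambda>i. int (dK x (F!i)))"
  let ?k1 = "nxt k" let ?k2 = "nxt ?k1" let ?k3 = "nxt ?k2" let ?k4 = "nxt ?k3"
  have lt: "?k1 < 5" "?k2 < 5" "?k3 < 5" "?k4 < 5" by (simp_all add: nxt_lt)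
  have L: "\<bar>d k - d ?k1\<bar> \<le> 1" "\<bar>d ?k1 - d ?k2\<bar> \<le> 1" "\<bar>d ?k2 - d ?k3\<bar> \<le> 1" "\<bar>d ?k3 - d ?k4\<bar> \<le> 1"
      "\<bar>d ?k4 - d k\<bar> \<le> 1"
    unfolding d_def using face_lip[OF F k] face_lip[OF F lt(1)] face_lip[OF F lt(2)] face_lip[OF F lt(3)]
      face_lip[OF F lt(4)] nxt5[OF k] by simp_all
  have M: "mu x F \<le> d k" "mu x F \<le> d ?k1" "mu x F \<le> d ?k2" "mu x F \<le> d ?k3" "mu x F \<le> d ?k4"
    unfolding d_def using mu_le[OF F] k lt by simp_all
  obtain j where j: "j < 5" "mu x F = d j" using mu_att[OF F] unfolding d_def by blast
  have A: "mu x F = d k \<or> mu x F = d ?k1 \<or> mu x F = d ?k2 \<or> mu x F = d ?k3 \<or> mu x F = d ?k4"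
    using cover5[OF k j(1)] j(2) by auto
  have "\<bar>max (d k + d ?k1 - 1) (2 * mu x F + 1) - max (d ?k1 + d ?k2 - 1) (2 * mu x F + 1)\<bar> \<le> 1"
    by (rule core5[OF L M A])
  then show ?thesis using ff_cc[OF F k] ff_cc[OF F lt(1)] unfolding d_def by simp
qed

lemma ff_lip_face: assumes F: "F \<in> Kpent" and G: "G \<in> omega_face F" and j: "j < 5"
  shows "\<bar>ff x (G!j) - ff x (G ! nxt j)\<bar> \<le> 1"
  using omega_face_cases[OF G]
proof (elim disjE exE conjE)
  assume G: "G = map (cc F) [0..<5]"
  have "G!j = cc F j" "G ! nxt j = cc F (nxt j)" unfolding G using j nxt_lt[of j] by simp_all
  then show ?thesis using cc_lip[OF F j] by simp
next
  fix i assume i: "i < 5" and G: "G = [F!i, mm F i, cc F i, cc F (prv i), mm F (prv i)]"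
  let ?p = "prv i"
  have p: "?p < 5" "nxt ?p = i" using prv_lt nxt_prv[OF i] by simp_all
  have jj: "j = 0 \<or> j = 1 \<or> j = 2 \<or> j = 3 \<or> j = 4" using j by linarith
  have n: "nxt 0 = 1" "nxt 1 = 2" "nxt 2 = 3" "nxt 3 = 4" "nxt 4 = 0" by (simp_all add: nxt_def)
  have e0: "\<bar>ff x (F!i) - ff x (mm F i)\<bar> \<le> 1"
    using ff_vert[OF F_in_verts[OF F i]] ff_mm[OF F i] face_lip[OF F i, of x] by simp
  have e1: "\<bar>ff x (mm F i) - ff x (cc F i)\<bar> \<le> 1"
    using ff_mm[OF F i, of x] ff_cc[OF F i, of x] core2[OF mu_le[OF F i, of x] mu_le[OF F nxt_lt[of i], of x]]
    by (simp add: abs_minus_commute)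
  have e2: "\<bar>ff x (cc F i) - ff x (cc F ?p)\<bar> \<le> 1"
    using cc_lip[OF F p(1), of x] p(2) by simp
  have e3: "\<bar>ff x (cc F ?p) - ff x (mm F ?p)\<bar> \<le> 1"
    using ff_mm[OF F p(1), of x] ff_cc[OF F p(1), of x] core2[OF mu_le[OF F p(1), of x] mu_le[OF F nxt_lt[of ?p], of x]]
    by simp
  have e4: "\<bar>ff x (mm F ?p) - ff x (F!i)\<bar> \<le> 1"
    using ff_vert[OF F_in_verts[OF F i]] ff_mm[OF F p(1)] face_lip[OF F p(1), of x] p(2) by simp
  show ?thesis using jj
  proof (elim disjE)
    assume "j = 0" then show ?thesis using e0 G n by simp
  next
    assume "j = 1" then show ?thesis using e1 G n by simp
  next
    assume "j = 2" then show ?thesis using e2 G n by simp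
  next
    assume "j = 3" then show ?thesis using e3 G n by simp
  next
    assume "j = 4" then show ?thesis using e4 G n by simp
  qed
qed

lemma ff_lip: assumes "adj omegaK a b" shows "\<bar>ff x a - ff x b\<bar> \<le> 1"
proof -
  from assms obtain G j where G: "G \<in> omegaK" "j < 5" and e: "{|a, b|} = edge_of G j" unfolding adj_def by blast
  from G(1) obtain F where F: "F \<in> Kpent" "G \<in> omega_face F" unfolding omegaK_def omega_def by blast
  have h: "\<bar>ff x (G!j) - ff x (G ! nxt j)\<bar> \<le> 1" by (rule ff_lip_face[OF F G(2)])
  have "(a = G!j \<and> b = G!nxt j) \<or> (a = G!nxt j \<and> b = G!j)"
    using fpair_eq[OF e[unfolded edge_of_def]] .
  then show ?thesis using h by (elim disjE conjE) (simp_all add: abs_minus_commute)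
qed

lemma ff_path: "successively (adj omegaK) ys \<Longrightarrow> ys \<noteq> [] \<Longrightarrow> ff x (last ys) \<le> ff x (hd ys) + int (length ys - 1)"
proof (induction ys)
  case (Cons a ys)
  show ?case
  proof (cases "ys = []")
    case True then show ?thesis by simp
  next
    case False
    then obtain b zs where ys: "ys = b # zs" by (cases ys) auto
    have "adj omegaK a b" "successively (adj omegaK) ys" using Cons.prems ys by auto
    then have "ff x b \<le> ff x a + 1" "ff x (last ys) \<le> ff x b + int (length ys - 1)"
      using ff_lip[of a b x] Cons.IH ys by auto
    then show ?thesis using ys by simp
  qed
qed simp

lemma last_in_verts: "xs \<noteq> [] \<Longrightarrow> successively (adj Kpent) xs \<Longrightarrow> hd xs \<in> verts Kpent \<Longrightarrow> last xs \<in> verts Kpent"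
proof (induction xs)
  case (Cons a xs)
  show ?case
  proof (cases "xs = []")
    case True then show ?thesis using Cons.prems by simp
  next
    case False
    then obtain b zs where xs: "xs = b # zs" by (cases xs) auto
    have "adj Kpent a b" "successively (adj Kpent) xs" using Cons.prems xs by auto
    then have "hd xs \<in> verts Kpent" using adj_verts(2) xs by simp
    then show ?thesis using Cons.IH False \<open>successively (adj Kpent) xs\<close> by simp
  qed
qed simp

theorem mainTheorem20:
  fixes \<gamma> :: "vx list" and n :: nat
  assumes "edge_path Kpent \<gamma>" and "plen \<gamma> = n" and "geodesic Kpent \<gamma>"
  shows "edge_path omegaK (subdiv \<gamma>) \<and> plen (subdiv \<gamma>) = 2 * n \<and> geodesic omegaK (subdiv \<gamma>)"
proof -
  have g: "\<gamma> \<noteq> []" "hd \<gamma> \<in> verts Kpent" "successively (adj Kpent) \<gamma>"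
    using assms(1) unfolding edge_path_conv by auto
  define x where "x = hd \<gamma>"
  have ep: "edge_path omegaK (subdiv \<gamma>)"
    unfolding edge_path_conv using subdiv_nonempty[OF g(1)] subdiv_hd[OF g(1)] g(2) verts_sub subdiv_succ[OF g(3)]
    by auto
  have len: "length \<gamma> = Suc n" using assms(2) g(1) unfolding plen_def by (cases \<gamma>) auto
  have pl: "plen (subdiv \<gamma>) = 2 * n" unfolding plen_def using subdiv_len[OF g(1)] len by simp
  have lastv: "last \<gamma> \<in> verts Kpent" using last_in_verts g by blast
  have r0: "reach x 0 x" unfolding reach_def by (intro exI[of _ "[x]"]) simp
  have d0: "dK x x = 0" unfolding dK_def using r0 by (auto intro: Least_equality)
  have rn: "reach x n (last \<gamma>)" unfolding reach_def
  proof (intro exI[of _ \<gamma>] conjI)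
    show "\<gamma> \<noteq> []" by (rule g(1))
    show "successively (adj Kpent) \<gamma>" by (rule g(3))
    show "hd \<gamma> = x" by (rule x_def[symmetric])
    show "last \<gamma> = last \<gamma>" by (rule refl)
    show "length \<gamma> = Suc n" by (rule len)
  qed
  have minimal: "n \<le> k" if r: "reach x k (last \<gamma>)" for k
  proof -
    obtain ys where ys: "ys \<noteq> []" "successively (adj Kpent) ys" "hd ys = x" "last ys = last \<gamma>" "length ys = Suc k"
      using r unfolding reach_def by blast
    have hy: "hd ys = hd \<gamma>" using ys(3) x_def by simp
    have "edge_path Kpent ys" unfolding edge_path_conv using ys(1,2) hy g(2) by simp
    moreover have "\<forall>ys. edge_path Kpent ys \<and> hd ys = hd \<gamma> \<and> last ys = last \<gamma> \<longrightarrow> plen \<gamma> \<le> plen ys"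
      using assms(3) unfolding geodesic_def by blast
    ultimately have "plen \<gamma> \<le> plen ys" using hy ys(4) by blast
    then show ?thesis using assms(2) ys(5) unfolding plen_def by simp
  qed
  have dn: "dK x (last \<gamma>) = n" unfolding dK_def using rn minimal by (auto intro: Least_equality)
  have geo: "geodesic omegaK (subdiv \<gamma>)"
    unfolding geodesic_def
  proof (intro conjI allI impI)
    show "edge_path omegaK (subdiv \<gamma>)" by (rule ep)
    fix ys assume ys: "edge_path omegaK ys \<and> hd ys = hd (subdiv \<gamma>) \<and> last ys = last (subdiv \<gamma>)"
    have y: "ys \<noteq> []" "successively (adj omegaK) ys" using ys unfolding edge_path_conv by auto
    have hy: "hd ys = x" using ys subdiv_hd[OF g(1)] x_def by simp
    have ly: "last ys = last \<gamma>" using ys subdiv_last[OF g(1)] by simp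
    have "ff x (last ys) \<le> ff x (hd ys) + int (length ys - 1)" by (rule ff_path[OF y(2) y(1)])
    moreover have "ff x (last ys) = 2 * int n" using ff_vert[OF lastv] ly dn by simp
    moreover have "ff x (hd ys) = 0" using ff_vert[OF g(2)] hy x_def d0 by simp
    ultimately have "2 * n \<le> length ys - 1" by linarith
    then show "plen (subdiv \<gamma>) \<le> plen ys" using pl unfolding plen_def by simp
  qed
  show ?thesis using ep pl geo by blast
qed

end
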